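(* Let $k$ be an algebraically closed field of characteristic zero, let $A$ be a cosemisimple Hopf algebra over $k$ with Haar measure $h$ and antipode $S$, and let $V$ be a finite-dimensional irreducible (simple) $A$-comodule. Then: (1) If $V$ is not self-dual (i.e. $V$ is not isomorphic to its dual comodule $V^*$), then $\nu_2(V) = 0$. (2) Suppose $V$ is self-dual, let $\beta : V \otimes V \to k$ be a non-degenerate $A$-colinear bilinear form, and let $E$ be the matrix of $\beta$ in some basis of $V$. Then $$\nu_2(V) = \frac{\dim(V)}{\mathrm{tr}(E\,({}^t\!E)^{-1})}.$$ (3) Suppose $V$ is self-dual and $S^2 = \mathrm{id}$. Then $\nu_2(V) = \pm 1$; moreover $\nu_2(V) = 1$ corresponds to the existence of an $A$-colinear symmetric non-degenerate bilinear form on $V$, and $\nu_2(V) = -1$ corresponds to the existence of an $A$-colinear skew-symmetric non-degenerate bilinear form on $V$.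
   Context: A Hopf algebra $A$ is cosemisimple if every $A$-comodule is a direct sum of simple comodules; such an $A$ has a unique Haar measure, i.e. a linear form $h : A \to k$ with $h(1)=1$ and $(\mathrm{id}\otimes h)\Delta = h(\cdot)1 = (h \otimes \mathrm{id})\Delta$. For a finite-dimensional right $A$-comodule $V$ with basis $e_1,\dots,e_n$ and coaction $e_j \mapsto \sum_i e_i \otimes a_{ij}$, the elements $a_{ij}\in A$ are the matrix coefficients; the character of $V$ is $\chi_V = \sum_i a_{ii}$ (the image of $\mathrm{id}_V$ under the coalgebra map $V^*\otimes V \to A$). The Schur indicator of $V$ is $\nu_2(V) := h(\chi_{V(1)}\chi_{V(2)})$, where $\Delta(\chi_V) = \chi_{V(1)}\otimes\chi_{V(2)}$ in Sweedler notation; equivalently $\nu_2(V) = \sum_{i,j} h(a_{ji}a_{ij})$. A bilinear form $\beta: V\otimes V \to k$ is $A$-colinear if it is a morphism of $A$-comodules, where $V\otimes V$ carries the tensor product coaction and $k$ the trivial coaction $1\mapsto 1\otimes 1$. *)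

theory Defs
  imports Main "HOL-Computational_Algebra.Polynomial"
begin

text \<open>A k-vector space with basis indexed by a type 'i is modelled as the finitely
supported functions 'i => 'k. Linear maps are given by their values on basis vectors.
Tensor products of such spaces are indexed by product types.\<close>

definition supp :: "('i \<Rightarrow> 'k::zero) \<Rightarrow> 'i set" where
  "supp x = {i. x i \<noteq> 0}"

definition fin :: "('i \<Rightarrow> 'k::zero) \<Rightarrow> bool" where
  "fin x \<longleftrightarrow> finite (supp x)"

definition bvec :: "'i \<Rightarrow> 'i \<Rightarrow> 'k::{zero,one}" where
  "bvec i = (\<lambda>j. if j = i then 1 else 0)"

definition lin :: "('i \<Rightarrow> 'j \<Rightarrow> 'k::comm_semiring_1) \<Rightarrow> ('i \<Rightarrow> 'k) \<Rightarrow> 'j \<Rightarrow> 'k" where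
  "lin f x = (\<lambda>t. \<Sum>s\<in>supp x. x s * f s t)"

definition linf :: "('i \<Rightarrow> 'k::comm_semiring_1) \<Rightarrow> ('i \<Rightarrow> 'k) \<Rightarrow> 'k" where
  "linf f x = (\<Sum>s\<in>supp x. x s * f s)"

definition tens :: "('i \<Rightarrow> 'k::times) \<Rightarrow> ('j \<Rightarrow> 'k) \<Rightarrow> ('i \<times> 'j \<Rightarrow> 'k)" where
  "tens x y = (\<lambda>(a, b). x a * y b)"

definition tmap :: "('i \<Rightarrow> 'j \<Rightarrow> 'k::times) \<Rightarrow> ('i2 \<Rightarrow> 'j2 \<Rightarrow> 'k) \<Rightarrow> ('i \<times> 'i2 \<Rightarrow> 'j \<times> 'j2 \<Rightarrow> 'k)" where
  "tmap f g = (\<lambda>(a, b). tens (f a) (g b))"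

definition rassoc :: "('a \<times> 'b) \<times> 'c \<Rightarrow> 'a \<times> ('b \<times> 'c) \<Rightarrow> 'k::{zero,one}" where
  "rassoc = (\<lambda>((a, b), c). bvec (a, (b, c)))"

text \<open>A Hopf algebra A over k with a fixed basis indexed by 'i, given by the values of
multiplication, unit, comultiplication, counit and antipode on basis vectors.\<close>

record ('i, 'k) hopf =
  hmul    :: "'i \<Rightarrow> 'i \<Rightarrow> 'i \<Rightarrow> 'k"
  hunit   :: "'i \<Rightarrow> 'k"
  hcomul  :: "'i \<Rightarrow> 'i \<times> 'i \<Rightarrow> 'k"
  hcounit :: "'i \<Rightarrow> 'k"
  hanti   :: "'i \<Rightarrow> 'i \<Rightarrow> 'k"

context
  fixes H :: "('i, 'k::field) hopf"
begin

definition Mul :: "('i \<Rightarrow> 'k) \<Rightarrow> ('i \<Rightarrow> 'k) \<Rightarrow> 'i \<Rightarrow> 'k" where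
  "Mul x y = lin (\<lambda>(a, b). hmul H a b) (tens x y)"

definition Comul :: "('i \<Rightarrow> 'k) \<Rightarrow> 'i \<times> 'i \<Rightarrow> 'k" where
  "Comul x = lin (hcomul H) x"

definition Counit :: "('i \<Rightarrow> 'k) \<Rightarrow> 'k" where
  "Counit x = linf (hcounit H) x"

definition Anti :: "('i \<Rightarrow> 'k) \<Rightarrow> 'i \<Rightarrow> 'k" where
  "Anti x = lin (hanti H) x"

definition Mul2 :: "('i \<times> 'i \<Rightarrow> 'k) \<Rightarrow> ('i \<times> 'i \<Rightarrow> 'k) \<Rightarrow> 'i \<times> 'i \<Rightarrow> 'k" where
  "Mul2 u v = lin (\<lambda>((a, b), (c, d)). tens (hmul H a c) (hmul H b d)) (tens u v)"

definition hopf_alg :: bool where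
  "hopf_alg \<longleftrightarrow>
    (\<forall>a b. fin (hmul H a b)) \<and> fin (hunit H) \<and> (\<forall>a. fin (hcomul H a)) \<and> (\<forall>a. fin (hanti H a)) \<and>
    \<comment> \<open>associative unital algebra\<close>
    (\<forall>x y z. fin x \<and> fin y \<and> fin z \<longrightarrow> Mul (Mul x y) z = Mul x (Mul y z)) \<and>
    (\<forall>x. fin x \<longrightarrow> Mul (hunit H) x = x \<and> Mul x (hunit H) = x) \<and>
    \<comment> \<open>coassociative counital coalgebra\<close>
    (\<forall>x. fin x \<longrightarrow> lin rassoc (lin (tmap (hcomul H) bvec) (Comul x)) = lin (tmap bvec (hcomul H)) (Comul x)) \<and>
    (\<forall>x. fin x \<longrightarrow> lin (\<lambda>(a, b). (\<lambda>t. hcounit H a * bvec b t)) (Comul x) = x \<and>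
                   lin (\<lambda>(a, b). (\<lambda>t. bvec a t * hcounit H b)) (Comul x) = x) \<and>
    \<comment> \<open>comultiplication and counit are algebra maps\<close>
    (\<forall>x y. fin x \<and> fin y \<longrightarrow> Comul (Mul x y) = Mul2 (Comul x) (Comul y)) \<and>
    Comul (hunit H) = tens (hunit H) (hunit H) \<and>
    (\<forall>x y. fin x \<and> fin y \<longrightarrow> Counit (Mul x y) = Counit x * Counit y) \<and>
    Counit (hunit H) = 1 \<and>
    \<comment> \<open>antipode\<close>
    (\<forall>x. fin x \<longrightarrow>
       lin (\<lambda>(a, b). Mul (hanti H a) (bvec b)) (Comul x) = (\<lambda>t. Counit x * hunit H t) \<and>
       lin (\<lambda>(a, b). Mul (bvec a) (hanti H b)) (Comul x) = (\<lambda>t. Counit x * hunit H t))"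

definition haar :: "('i \<Rightarrow> 'k) \<Rightarrow> bool" where
  "haar h \<longleftrightarrow> linf h (hunit H) = 1 \<and>
    (\<forall>x. fin x \<longrightarrow>
       lin (\<lambda>(a, b). (\<lambda>t. bvec a t * h b)) (Comul x) = (\<lambda>t. linf h x * hunit H t) \<and>
       lin (\<lambda>(a, b). (\<lambda>t. h a * bvec b t)) (Comul x) = (\<lambda>t. linf h x * hunit H t))"

text \<open>A right A-comodule V of dimension n with basis e_0..e_(n-1) and coaction
e_j |-> sum_i e_i (x) u i j.  Vectors of V are functions nat => k vanishing from n on.\<close>

definition comod :: "nat \<Rightarrow> (nat \<Rightarrow> nat \<Rightarrow> 'i \<Rightarrow> 'k) \<Rightarrow> bool" where
  "comod n u \<longleftrightarrow>
    (\<forall>i<n. \<forall>j<n. fin (u i j)) \<and>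
    (\<forall>i<n. \<forall>j<n. Comul (u i j) = (\<lambda>p. \<Sum>l<n. tens (u i l) (u l j) p)) \<and>
    (\<forall>i<n. \<forall>j<n. Counit (u i j) = (if i = j then 1 else 0))"

definition vspace :: "nat \<Rightarrow> (nat \<Rightarrow> 'k) set" where
  "vspace n = {v. \<forall>i\<ge>n. v i = 0}"

text \<open>W is a subcomodule: a subspace with rho(W) contained in W (x) A.  The coefficient
of rho(v) at e_i (x) b_t is  sum_j v_j * u i j t.\<close>
definition subcomod :: "nat \<Rightarrow> (nat \<Rightarrow> nat \<Rightarrow> 'i \<Rightarrow> 'k) \<Rightarrow> (nat \<Rightarrow> 'k) set \<Rightarrow> bool" where
  "subcomod n u W \<longleftrightarrow>
    W \<subseteq> vspace n \<and> (\<lambda>_. 0) \<in> W \<and>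
    (\<forall>v\<in>W. \<forall>w\<in>W. (\<lambda>i. v i + w i) \<in> W) \<and>
    (\<forall>c. \<forall>v\<in>W. (\<lambda>i. c * v i) \<in> W) \<and>
    (\<forall>v\<in>W. \<forall>t. (\<lambda>i. if i < n then (\<Sum>j<n. v j * u i j t) else 0) \<in> W)"

definition simple_comod :: "nat \<Rightarrow> (nat \<Rightarrow> nat \<Rightarrow> 'i \<Rightarrow> 'k) \<Rightarrow> bool" where
  "simple_comod n u \<longleftrightarrow> comod n u \<and> n > 0 \<and>
    (\<forall>W. subcomod n u W \<longrightarrow> W = {\<lambda>_. 0} \<or> W = vspace n)"

definition simple_sub :: "nat \<Rightarrow> (nat \<Rightarrow> nat \<Rightarrow> 'i \<Rightarrow> 'k) \<Rightarrow> (nat \<Rightarrow> 'k) set \<Rightarrow> bool" where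
  "simple_sub n u W \<longleftrightarrow> subcomod n u W \<and> W \<noteq> {\<lambda>_. 0} \<and>
    (\<forall>W'. subcomod n u W' \<and> W' \<subseteq> W \<longrightarrow> W' = {\<lambda>_. 0} \<or> W' = W)"

definition cosemisimple :: bool where
  "cosemisimple \<longleftrightarrow>
    (\<forall>n (u :: nat \<Rightarrow> nat \<Rightarrow> 'i \<Rightarrow> 'k). comod n u \<longrightarrow>
      (\<exists>m (Ws :: nat \<Rightarrow> (nat \<Rightarrow> 'k) set). (\<forall>l<m. simple_sub n u (Ws l)) \<and>
        (\<forall>v\<in>vspace n. \<exists>!w. (\<forall>l<m. w l \<in> Ws l) \<and> (\<forall>l\<ge>m. w l = (\<lambda>_. 0)) \<and>
                              v = (\<lambda>i. \<Sum>l<m. w l i))))"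

text \<open>Dual comodule V^* in the dual basis: e_j^* |-> sum_i e_i^* (x) S(u j i).\<close>
definition dual_comod :: "nat \<Rightarrow> (nat \<Rightarrow> nat \<Rightarrow> 'i \<Rightarrow> 'k) \<Rightarrow> nat \<Rightarrow> nat \<Rightarrow> 'i \<Rightarrow> 'k" where
  "dual_comod n u = (\<lambda>i j. Anti (u j i))"

definition mat_inverse_of :: "nat \<Rightarrow> (nat \<Rightarrow> nat \<Rightarrow> 'k) \<Rightarrow> (nat \<Rightarrow> nat \<Rightarrow> 'k) \<Rightarrow> bool" where
  "mat_inverse_of n P Q \<longleftrightarrow>
    (\<forall>i<n. \<forall>j<n. (\<Sum>l<n. P i l * Q l j) = (if i = j then 1 else 0) \<and>
                 (\<Sum>l<n. Q i l * P l j) = (if i = j then 1 else 0))"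

definition invertible :: "nat \<Rightarrow> (nat \<Rightarrow> nat \<Rightarrow> 'k) \<Rightarrow> bool" where
  "invertible n P \<longleftrightarrow> (\<exists>Q. mat_inverse_of n P Q)"

text \<open>Comodule isomorphism between n-dimensional comodules u and w: an invertible
matrix P (the linear map e_j |-> sum_i P i j e'_i) with (P (x) id) rho = rho' P.\<close>
definition iso_comod :: "nat \<Rightarrow> (nat \<Rightarrow> nat \<Rightarrow> 'i \<Rightarrow> 'k) \<Rightarrow> nat \<Rightarrow> (nat \<Rightarrow> nat \<Rightarrow> 'i \<Rightarrow> 'k) \<Rightarrow> bool" where
  "iso_comod n u m w \<longleftrightarrow> n = m \<and>
    (\<exists>P. invertible n P \<and>
      (\<forall>i<n. \<forall>j<n. (\<lambda>t. \<Sum>l<n. P i l * u l j t) = (\<lambda>t. \<Sum>l<n. w i l t * P l j)))"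

definition self_dual :: "nat \<Rightarrow> (nat \<Rightarrow> nat \<Rightarrow> 'i \<Rightarrow> 'k) \<Rightarrow> bool" where
  "self_dual n u \<longleftrightarrow> iso_comod n u n (dual_comod n u)"

text \<open>The bilinear form beta on V with matrix E (beta(e_p,e_q) = E p q) is A-colinear
V (x) V -> k: (beta (x) id) rho_{V(x)V} = beta(-) 1.\<close>
definition colinear_form :: "nat \<Rightarrow> (nat \<Rightarrow> nat \<Rightarrow> 'i \<Rightarrow> 'k) \<Rightarrow> (nat \<Rightarrow> nat \<Rightarrow> 'k) \<Rightarrow> bool" where
  "colinear_form n u E \<longleftrightarrow>
    (\<forall>i<n. \<forall>j<n. (\<lambda>t. \<Sum>p<n. \<Sum>q<n. E p q * Mul (u p i) (u q j) t) = (\<lambda>t. E i j * hunit H t))"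

definition nu2 :: "('i \<Rightarrow> 'k) \<Rightarrow> nat \<Rightarrow> (nat \<Rightarrow> nat \<Rightarrow> 'i \<Rightarrow> 'k) \<Rightarrow> 'k" where
  "nu2 h n u = (\<Sum>i<n. \<Sum>j<n. linf h (Mul (u j i) (u i j)))"

end

definition mat_trace :: "nat \<Rightarrow> (nat \<Rightarrow> nat \<Rightarrow> 'k::comm_semiring_1) \<Rightarrow> 'k" where
  "mat_trace n P = (\<Sum>i<n. P i i)"

definition mat_mult :: "nat \<Rightarrow> (nat \<Rightarrow> nat \<Rightarrow> 'k::comm_semiring_1) \<Rightarrow> (nat \<Rightarrow> nat \<Rightarrow> 'k) \<Rightarrow> nat \<Rightarrow> nat \<Rightarrow> 'k" where
  "mat_mult n P Q = (\<lambda>i j. \<Sum>l<n. P i l * Q l j)"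

definition mat_transpose :: "(nat \<Rightarrow> nat \<Rightarrow> 'k) \<Rightarrow> nat \<Rightarrow> nat \<Rightarrow> 'k" where
  "mat_transpose P = (\<lambda>i j. P j i)"

end

theory Submission
  imports Defs "Jordan_Normal_Form.Char_Poly"
begin

lemma supp_sum_sub: "supp (\<lambda>t. \<Sum>k\<in>K. X k t) \<subseteq> (\<Union>k\<in>K. supp (X k))"
proof
  fix t assume "t \<in> supp (\<lambda>t. \<Sum>k\<in>K. X k t)"
  then have "(\<Sum>k\<in>K. X k t) \<noteq> 0" by (simp add: supp_def)
  then obtain k where "k \<in> K" "X k t \<noteq> 0" by (meson sum.neutral)
  then show "t \<in> (\<Union>k\<in>K. supp (X k))" by (auto simp: supp_def)
qed

lemma fin_sum: "finite K \<Longrightarrow> (\<And>k. k \<in> K \<Longrightarrow> fin (X k)) \<Longrightarrow> fin (\<lambda>t. \<Sum>k\<in>K. X k t)"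
  unfolding fin_def by (rule finite_subset[OF supp_sum_sub]) auto

lemma fin_scale: "fin x \<Longrightarrow> fin (\<lambda>t. (c::'k::field) * x t)"
  unfolding fin_def supp_def by (rule finite_subset[of _ "{i. x i \<noteq> 0}"]) auto

lemma fin_scale': "fin x \<Longrightarrow> fin (\<lambda>t. x t * (c::'k::field))"
  unfolding fin_def supp_def by (rule finite_subset[of _ "{i. x i \<noteq> 0}"]) auto

lemma fin_zero[simp]: "fin (\<lambda>t. 0)" unfolding fin_def supp_def by simp

lemma fin_bvec[simp]: "fin (bvec i)" unfolding fin_def supp_def bvec_def by simp

lemma lin_eq: assumes "finite S" "supp x \<subseteq> S" shows "lin f x t = (\<Sum>s\<in>S. x s * f s t)"
  unfolding lin_def using assms by (intro sum.mono_neutral_left) (auto simp: supp_def)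

lemma linf_eq: assumes "finite S" "supp x \<subseteq> S" shows "linf f x = (\<Sum>s\<in>S. x s * f s)"
  unfolding linf_def using assms by (intro sum.mono_neutral_left) (auto simp: supp_def)

lemma lin_sum:
  fixes X :: "'a \<Rightarrow> 'i \<Rightarrow> 'k::comm_semiring_1"
  assumes K: "finite K" and X: "\<And>k. k \<in> K \<Longrightarrow> fin (X k)"
  shows "lin f (\<lambda>t. \<Sum>k\<in>K. X k t) = (\<lambda>s. \<Sum>k\<in>K. lin f (X k) s)"
proof
  fix s
  define S where "S = (\<Union>k\<in>K. supp (X k))"
  have S: "finite S" using K X unfolding S_def fin_def by auto
  have "lin f (\<lambda>t. \<Sum>k\<in>K. X k t) s = (\<Sum>a\<in>S. (\<Sum>k\<in>K. X k a) * f a s)"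
    by (rule lin_eq[OF S]) (unfold S_def, rule supp_sum_sub)
  also have "\<dots> = (\<Sum>k\<in>K. \<Sum>a\<in>S. X k a * f a s)"
    by (simp add: sum_distrib_right sum.swap[of _ S])
  also have "\<dots> = (\<Sum>k\<in>K. lin f (X k) s)"
    using S by (intro sum.cong refl lin_eq[symmetric]) (auto simp: S_def)
  finally show "lin f (\<lambda>t. \<Sum>k\<in>K. X k t) s = (\<Sum>k\<in>K. lin f (X k) s)" .
qed

lemma linf_sum:
  fixes X :: "'a \<Rightarrow> 'i \<Rightarrow> 'k::comm_semiring_1"
  assumes K: "finite K" and X: "\<And>k. k \<in> K \<Longrightarrow> fin (X k)"
  shows "linf f (\<lambda>t. \<Sum>k\<in>K. X k t) = (\<Sum>k\<in>K. linf f (X k))"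
proof -
  define S where "S = (\<Union>k\<in>K. supp (X k))"
  have S: "finite S" using K X unfolding S_def fin_def by auto
  have "linf f (\<lambda>t. \<Sum>k\<in>K. X k t) = (\<Sum>a\<in>S. (\<Sum>k\<in>K. X k a) * f a)"
    by (rule linf_eq[OF S]) (unfold S_def, rule supp_sum_sub)
  also have "\<dots> = (\<Sum>k\<in>K. \<Sum>a\<in>S. X k a * f a)"
    by (simp add: sum_distrib_right sum.swap[of _ S])
  also have "\<dots> = (\<Sum>k\<in>K. linf f (X k))"
    using S by (intro sum.cong refl linf_eq[symmetric]) (auto simp: S_def)
  finally show ?thesis .
qed

lemma lin_scale:
  fixes x :: "'i \<Rightarrow> 'k::field"
  assumes "fin x" shows "lin f (\<lambda>t. c * x t) = (\<lambda>s. c * lin f x s)"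
proof
  fix s
  have S: "finite (supp x)" using assms by (simp add: fin_def)
  have "lin f (\<lambda>t. c * x t) s = (\<Sum>a\<in>supp x. c * x a * f a s)"
    using S by (intro lin_eq) (auto simp: supp_def)
  also have "\<dots> = c * lin f x s" by (simp add: lin_def sum_distrib_left mult.assoc)
  finally show "lin f (\<lambda>t. c * x t) s = c * lin f x s" .
qed

lemma linf_scale:
  fixes x :: "'i \<Rightarrow> 'k::field"
  assumes "fin x" shows "linf f (\<lambda>t. c * x t) = c * linf f x"
proof -
  have S: "finite (supp x)" using assms by (simp add: fin_def)
  have "linf f (\<lambda>t. c * x t) = (\<Sum>a\<in>supp x. c * x a * f a)"
    using S by (intro linf_eq) (auto simp: supp_def)
  also have "\<dots> = c * linf f x" by (simp add: linf_def sum_distrib_left mult.assoc)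
  finally show ?thesis .
qed

lemma fin_lin:
  fixes x :: "'i \<Rightarrow> 'k::field"
  assumes "fin x" "\<And>s. s \<in> supp x \<Longrightarrow> fin (f s)" shows "fin (lin f x)"
proof -
  have "lin f x = (\<lambda>t. \<Sum>s\<in>supp x. x s * f s t)" by (simp add: lin_def fun_eq_iff)
  moreover have "fin (\<lambda>t. \<Sum>s\<in>supp x. x s * f s t)"
    using assms by (intro fin_sum) (auto simp: fin_def intro: fin_scale[unfolded fin_def])
  ultimately show ?thesis by simp
qed

lemma supp_tens: "supp (tens x (y::'j\<Rightarrow>'k::comm_semiring_1)) \<subseteq> supp x \<times> supp y"
  by (auto simp: supp_def tens_def)

lemma fin_tens: "fin x \<Longrightarrow> fin y \<Longrightarrow> fin (tens x (y::'j\<Rightarrow>'k::field))"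
  unfolding fin_def by (rule finite_subset[OF supp_tens]) auto

lemma tens_sum_left: "tens (\<lambda>t. \<Sum>k\<in>K. X k t) y = (\<lambda>p. \<Sum>k\<in>K. tens (X k) (y::'j\<Rightarrow>'k::comm_semiring_1) p)"
  by (auto simp: tens_def fun_eq_iff sum_distrib_right)

lemma tens_sum_right: "tens x (\<lambda>t. \<Sum>k\<in>K. Y k t) = (\<lambda>p. \<Sum>k\<in>K. tens x (Y k::'j\<Rightarrow>'k::comm_semiring_1) p)"
  by (auto simp: tens_def fun_eq_iff sum_distrib_left)

lemma tens_scale_left: "tens (\<lambda>t. c * x t) y = (\<lambda>p. c * tens x (y::'j\<Rightarrow>'k::comm_semiring_1) p)"
  by (auto simp: tens_def fun_eq_iff mult_ac)

lemma tens_scale_right: "tens x (\<lambda>t. c * y t) = (\<lambda>p. c * tens x (y::'j\<Rightarrow>'k::comm_semiring_1) p)"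
  by (auto simp: tens_def fun_eq_iff mult_ac)

lemma lin_tens:
  fixes x :: "'a \<Rightarrow> 'k::field"
  assumes "fin x" "fin y"
  shows "lin G (tens x y) t = (\<Sum>a\<in>supp x. \<Sum>b\<in>supp y. x a * y b * G (a, b) t)"
proof -
  have "lin G (tens x y) t = (\<Sum>p\<in>supp x \<times> supp y. tens x y p * G p t)"
    using assms supp_tens by (intro lin_eq) (auto simp: fin_def)
  also have "\<dots> = (\<Sum>a\<in>supp x. \<Sum>b\<in>supp y. x a * y b * G (a, b) t)"
    by (simp add: sum.cartesian_product tens_def split_def)
  finally show ?thesis .
qed

lemma vec_expand: "fin (x::'i\<Rightarrow>'k::field) \<Longrightarrow> x = (\<lambda>s. \<Sum>b\<in>supp x. x b * bvec b s)"
proof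
  fix s assume f: "fin x"
  have "(\<Sum>b\<in>supp x. x b * bvec b s) = (\<Sum>b\<in>supp x. if s = b then x b else 0)"
    by (intro sum.cong) (auto simp: bvec_def)
  also have "\<dots> = x s" using f by (simp add: fin_def supp_def)
  finally show "x s = (\<Sum>b\<in>supp x. x b * bvec b s)" by simp
qed

lemma sum_bvec: "fin (x::'i\<Rightarrow>'k::field) \<Longrightarrow> (\<Sum>b\<in>supp x. x b * bvec b s) = x s"
  using vec_expand by metis

context
  fixes H :: "('i, 'k::field) hopf"
  assumes hopf: "hopf_alg H"
begin

lemma fin_hmul: "fin (hmul H a b)" using hopf by (simp add: hopf_alg_def)
lemma fin_hunit[simp]: "fin (hunit H)" using hopf by (simp add: hopf_alg_def)
lemma fin_hcomul: "fin (hcomul H a)" using hopf by (simp add: hopf_alg_def)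
lemma fin_hanti: "fin (hanti H a)" using hopf by (simp add: hopf_alg_def)

lemma Mul_assoc: "fin x \<Longrightarrow> fin y \<Longrightarrow> fin z \<Longrightarrow> Mul H (Mul H x y) z = Mul H x (Mul H y z)"
  using hopf by (simp add: hopf_alg_def)
lemma Mul_unit_left: "fin x \<Longrightarrow> Mul H (hunit H) x = x"
  using hopf by (simp add: hopf_alg_def)
lemma Mul_unit_right: "fin x \<Longrightarrow> Mul H x (hunit H) = x"
  using hopf by (simp add: hopf_alg_def)
lemma Comul_Mul: "fin x \<Longrightarrow> fin y \<Longrightarrow> Comul H (Mul H x y) = Mul2 H (Comul H x) (Comul H y)"
  using hopf by (simp add: hopf_alg_def)
lemma antipode_left: "fin x \<Longrightarrow> lin (\<lambda>(a, b). Mul H (hanti H a) (bvec b)) (Comul H x) = (\<lambda>t. Counit H x * hunit H t)"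
  using hopf by (simp add: hopf_alg_def)
lemma antipode_right: "fin x \<Longrightarrow> lin (\<lambda>(a, b). Mul H (bvec a) (hanti H b)) (Comul H x) = (\<lambda>t. Counit H x * hunit H t)"
  using hopf by (simp add: hopf_alg_def)

lemma fin_Mul[simp]: "fin x \<Longrightarrow> fin y \<Longrightarrow> fin (Mul H x y)"
  unfolding Mul_def by (intro fin_lin fin_tens) (auto simp: fin_hmul)

lemma fin_Anti[simp]: "fin x \<Longrightarrow> fin (Anti H x)"
  unfolding Anti_def by (intro fin_lin) (auto simp: fin_hanti)

lemma Mul_sum_left:
  "finite K \<Longrightarrow> (\<And>k. k \<in> K \<Longrightarrow> fin (X k)) \<Longrightarrow> fin y \<Longrightarrow>
   Mul H (\<lambda>t. \<Sum>k\<in>K. X k t) y = (\<lambda>s. \<Sum>k\<in>K. Mul H (X k) y s)"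
  unfolding Mul_def tens_sum_left by (intro lin_sum fin_tens) auto

lemma Mul_sum_right:
  "finite K \<Longrightarrow> (\<And>k. k \<in> K \<Longrightarrow> fin (Y k)) \<Longrightarrow> fin x \<Longrightarrow>
   Mul H x (\<lambda>t. \<Sum>k\<in>K. Y k t) = (\<lambda>s. \<Sum>k\<in>K. Mul H x (Y k) s)"
  unfolding Mul_def tens_sum_right by (intro lin_sum fin_tens) auto

lemma Mul_scale_left: "fin x \<Longrightarrow> fin y \<Longrightarrow> Mul H (\<lambda>t. c * x t) y = (\<lambda>s. c * Mul H x y s)"
  unfolding Mul_def tens_scale_left by (intro lin_scale fin_tens)

lemma Mul_scale_right: "fin x \<Longrightarrow> fin y \<Longrightarrow> Mul H x (\<lambda>t. c * y t) = (\<lambda>s. c * Mul H x y s)"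
  unfolding Mul_def tens_scale_right by (intro lin_scale fin_tens)

lemma Anti_sum:
  "finite K \<Longrightarrow> (\<And>k. k \<in> K \<Longrightarrow> fin (X k)) \<Longrightarrow>
   Anti H (\<lambda>t. \<Sum>k\<in>K. X k t) = (\<lambda>s. \<Sum>k\<in>K. Anti H (X k) s)"
  unfolding Anti_def by (rule lin_sum)

lemma Anti_scale: "fin x \<Longrightarrow> Anti H (\<lambda>t. c * x t) = (\<lambda>s. c * Anti H x s)"
  unfolding Anti_def by (rule lin_scale)

lemma Mul_expand: "fin x \<Longrightarrow> fin y \<Longrightarrow> Mul H x y t = (\<Sum>a\<in>supp x. \<Sum>b\<in>supp y. x a * y b * hmul H a b t)"
  unfolding Mul_def by (subst lin_tens) auto

lemma antipode_tens_left:
  assumes P: "fin P" and Q: "fin Q"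
  shows "lin (\<lambda>(a, b). Mul H (hanti H a) (bvec b)) (tens P Q) = Mul H (Anti H P) Q"
proof
  fix t
  have AP: "Anti H P = (\<lambda>s. \<Sum>a\<in>supp P. P a * hanti H a s)" by (simp add: Anti_def lin_def fun_eq_iff)
  have "Mul H (Anti H P) Q t = Mul H (\<lambda>s. \<Sum>a\<in>supp P. P a * hanti H a s) (\<lambda>s. \<Sum>b\<in>supp Q. Q b * bvec b s) t"
    using Q by (simp add: AP sum_bvec)
  also have "\<dots> = (\<Sum>a\<in>supp P. \<Sum>b\<in>supp Q. P a * (Q b * Mul H (hanti H a) (bvec b) t))"
    using P Q
    using fin_def[of P] fin_def[of Q]
    by (simp add: Mul_sum_left Mul_sum_right Mul_scale_left Mul_scale_right fin_sum fin_scale fin_hanti)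
  also have "\<dots> = lin (\<lambda>(a, b). Mul H (hanti H a) (bvec b)) (tens P Q) t"
    using P Q by (simp add: lin_tens mult.assoc)
  finally show "lin (\<lambda>(a, b). Mul H (hanti H a) (bvec b)) (tens P Q) t = Mul H (Anti H P) Q t" by simp
qed

lemma antipode_tens_right:
  assumes P: "fin P" and Q: "fin Q"
  shows "lin (\<lambda>(a, b). Mul H (bvec a) (hanti H b)) (tens P Q) = Mul H P (Anti H Q)"
proof
  fix t
  have AQ: "Anti H Q = (\<lambda>s. \<Sum>b\<in>supp Q. Q b * hanti H b s)" by (simp add: Anti_def lin_def fun_eq_iff)
  have "Mul H P (Anti H Q) t = Mul H (\<lambda>s. \<Sum>a\<in>supp P. P a * bvec a s) (\<lambda>s. \<Sum>b\<in>supp Q. Q b * hanti H b s) t"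
    using P by (simp add: AQ sum_bvec)
  also have "\<dots> = (\<Sum>a\<in>supp P. \<Sum>b\<in>supp Q. P a * (Q b * Mul H (bvec a) (hanti H b) t))"
    using P Q
    using fin_def[of P] fin_def[of Q]
    by (simp add: Mul_sum_left Mul_sum_right Mul_scale_left Mul_scale_right fin_sum fin_scale fin_hanti)
  also have "\<dots> = lin (\<lambda>(a, b). Mul H (bvec a) (hanti H b)) (tens P Q) t"
    using P Q by (simp add: lin_tens mult.assoc)
  finally show "lin (\<lambda>(a, b). Mul H (bvec a) (hanti H b)) (tens P Q) t = Mul H P (Anti H Q) t" by simp
qed

end

lemma prodsum: "sum G (X\<times>Y) = (\<Sum>p\<in>X. \<Sum>q\<in>Y. (G (p,q)::'k::comm_monoid_add))"
  using sum.cartesian_product[of "\<lambda>p q. G(p,q)" Y X] by simp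

lemma sum4_prod:
  fixes f :: "'a \<Rightarrow> 'b \<Rightarrow> 'c \<Rightarrow> 'd \<Rightarrow> 'k::comm_semiring_1"
  shows "(\<Sum>((x,y),(z,w))\<in>(A\<times>B)\<times>(C\<times>D). f x y z w) = (\<Sum>x\<in>A. \<Sum>z\<in>C. \<Sum>y\<in>B. \<Sum>w\<in>D. f x y z w)"
proof -
  have "(\<Sum>((x,y),(z,w))\<in>(A\<times>B)\<times>(C\<times>D). f x y z w) = (\<Sum>x\<in>A. \<Sum>y\<in>B. \<Sum>z\<in>C. \<Sum>w\<in>D. f x y z w)"
    by (simp only: prodsum prod.case)
  also have "\<dots> = (\<Sum>x\<in>A. \<Sum>z\<in>C. \<Sum>y\<in>B. \<Sum>w\<in>D. f x y z w)"
    by (rule sum.cong[OF refl], rule sum.swap)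
  finally show ?thesis .
qed

context
  fixes H :: "('i, 'k::field) hopf"
  assumes hopf: "hopf_alg H"
begin

lemma Mul2_tens:
  assumes a: "fin a" and b: "fin b" and c: "fin c" and d: "fin d"
  shows "Mul2 H (tens a b) (tens c d) = tens (Mul H a c) (Mul H b d)"
proof
  fix p :: "'i \<times> 'i"
  obtain t1 t2 where p: "p = (t1, t2)" by (cases p)
  let ?S = "(supp a \<times> supp b) \<times> (supp c \<times> supp d)"
  have S: "finite ?S" using a b c d by (simp add: fin_def)
  have sub: "supp (tens (tens a b) (tens c d)) \<subseteq> ?S"
    using supp_tens[of "tens a b" "tens c d"] supp_tens[of a b] supp_tens[of c d] by blast
  have "Mul2 H (tens a b) (tens c d) p =
     (\<Sum>((x,y),(z,w))\<in>?S. a x * b y * (c z * d w) * (hmul H x z t1 * hmul H y w t2))"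
    unfolding Mul2_def by (subst lin_eq[OF S sub]) (simp add: p tens_def split_def)
  also have "\<dots> = (\<Sum>x\<in>supp a. \<Sum>z\<in>supp c. \<Sum>y\<in>supp b. \<Sum>w\<in>supp d.
       a x * b y * (c z * d w) * (hmul H x z t1 * hmul H y w t2))"
    by (rule sum4_prod)
  also have "\<dots> = Mul H a c t1 * Mul H b d t2"
    using a b c d unfolding Mul_expand[OF hopf a c] Mul_expand[OF hopf b d] sum_distrib_right
    by (simp add: sum_distrib_left mult_ac)
  finally show "Mul2 H (tens a b) (tens c d) p = tens (Mul H a c) (Mul H b d) p"
    by (simp add: p tens_def)
qed

lemma Mul2_sum_left:
  "finite K \<Longrightarrow> (\<And>k. k \<in> K \<Longrightarrow> fin (X k)) \<Longrightarrow> fin y \<Longrightarrow>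
   Mul2 H (\<lambda>t. \<Sum>k\<in>K. X k t) y = (\<lambda>s. \<Sum>k\<in>K. Mul2 H (X k) y s)"
  unfolding Mul2_def tens_sum_left by (intro lin_sum fin_tens) auto

lemma Mul2_sum_right:
  "finite K \<Longrightarrow> (\<And>k. k \<in> K \<Longrightarrow> fin (Y k)) \<Longrightarrow> fin x \<Longrightarrow>
   Mul2 H x (\<lambda>t. \<Sum>k\<in>K. Y k t) = (\<lambda>s. \<Sum>k\<in>K. Mul2 H x (Y k) s)"
  unfolding Mul2_def tens_sum_right by (intro lin_sum fin_tens) auto

end

lemma haar_fun_R:
  fixes P :: "'i \<Rightarrow> 'k::field"
  assumes "fin P" "fin Q"
  shows "lin (\<lambda>(a, b). (\<lambda>t. bvec a t * h b)) (tens P Q) = (\<lambda>t. P t * linf h Q)"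
proof
  fix t
  have "lin (\<lambda>(a, b). (\<lambda>t. bvec a t * h b)) (tens P Q) t = (\<Sum>a\<in>supp P. \<Sum>b\<in>supp Q. P a * Q b * (bvec a t * h b))"
    using assms by (simp add: lin_tens)
  also have "\<dots> = (\<Sum>a\<in>supp P. P a * bvec a t) * (\<Sum>b\<in>supp Q. Q b * h b)"
    by (simp add: sum_distrib_left sum_distrib_right mult_ac)
  also have "\<dots> = P t * linf h Q" using assms by (simp add: sum_bvec linf_def)
  finally show "lin (\<lambda>(a, b). (\<lambda>t. bvec a t * h b)) (tens P Q) t = P t * linf h Q" .
qed

lemma haar_fun_L:
  fixes P :: "'i \<Rightarrow> 'k::field"
  assumes "fin P" "fin Q"
  shows "lin (\<lambda>(a, b). (\<lambda>t. h a * bvec b t)) (tens P Q) = (\<lambda>t. linf h P * Q t)"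
proof
  fix t
  have "lin (\<lambda>(a, b). (\<lambda>t. h a * bvec b t)) (tens P Q) t = (\<Sum>a\<in>supp P. \<Sum>b\<in>supp Q. P a * Q b * (h a * bvec b t))"
    using assms by (simp add: lin_tens)
  also have "\<dots> = (\<Sum>a\<in>supp P. P a * h a) * (\<Sum>b\<in>supp Q. Q b * bvec b t)"
    unfolding sum_distrib_right by (simp add: sum_distrib_left mult_ac)
  also have "\<dots> = linf h P * Q t" using assms by (simp add: sum_bvec linf_def)
  finally show "lin (\<lambda>(a, b). (\<lambda>t. h a * bvec b t)) (tens P Q) t = linf h P * Q t" .
qed

lemma fin_sum_lt: "(\<And>k. k < (n::nat) \<Longrightarrow> fin (X k)) \<Longrightarrow> fin (\<lambda>t. \<Sum>k<n. (X k t::'k::field))"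
  by (rule fin_sum) auto
lemma lin_sum_lt: "(\<And>k. k < (n::nat) \<Longrightarrow> fin (X k)) \<Longrightarrow> lin f (\<lambda>t. \<Sum>k<n. (X k t::'k::field)) = (\<lambda>s. \<Sum>k<n. lin f (X k) s)"
  by (rule lin_sum) auto
lemma linf_sum_lt: "(\<And>k. k < (n::nat) \<Longrightarrow> fin (X k)) \<Longrightarrow> linf f (\<lambda>t. \<Sum>k<n. (X k t::'k::field)) = (\<Sum>k<n. linf f (X k))"
  by (rule linf_sum) auto
lemma Mul_sum_left_lt: "hopf_alg H \<Longrightarrow> (\<And>k. k < (n::nat) \<Longrightarrow> fin (X k)) \<Longrightarrow> fin y \<Longrightarrow>
   Mul H (\<lambda>t. \<Sum>k<n. X k t) y = (\<lambda>s. \<Sum>k<n. Mul H (X k) y s)"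
  by (rule Mul_sum_left) auto
lemma Mul_sum_right_lt: "hopf_alg H \<Longrightarrow> (\<And>k. k < (n::nat) \<Longrightarrow> fin (Y k)) \<Longrightarrow> fin x \<Longrightarrow>
   Mul H x (\<lambda>t. \<Sum>k<n. Y k t) = (\<lambda>s. \<Sum>k<n. Mul H x (Y k) s)"
  by (rule Mul_sum_right) auto
lemma Mul2_sum_left_lt: "hopf_alg H \<Longrightarrow> (\<And>k. k < (n::nat) \<Longrightarrow> fin (X k)) \<Longrightarrow> fin y \<Longrightarrow>
   Mul2 H (\<lambda>t. \<Sum>k<n. X k t) y = (\<lambda>s. \<Sum>k<n. Mul2 H (X k) y s)"
  by (rule Mul2_sum_left) auto
lemma Mul2_sum_right_lt: "hopf_alg H \<Longrightarrow> (\<And>k. k < (n::nat) \<Longrightarrow> fin (Y k)) \<Longrightarrow> fin x \<Longrightarrow>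
   Mul2 H x (\<lambda>t. \<Sum>k<n. Y k t) = (\<lambda>s. \<Sum>k<n. Mul2 H x (Y k) s)"
  by (rule Mul2_sum_right) auto
lemma Anti_sum_lt: "hopf_alg H \<Longrightarrow> (\<And>k. k < (n::nat) \<Longrightarrow> fin (X k)) \<Longrightarrow>
   Anti H (\<lambda>t. \<Sum>k<n. X k t) = (\<lambda>s. \<Sum>k<n. Anti H (X k) s)"
  by (rule Anti_sum) auto

locale cm =
  fixes H :: "('i, 'k::field) hopf" and n :: nat and u :: "nat \<Rightarrow> nat \<Rightarrow> 'i \<Rightarrow> 'k"
    and h :: "'i \<Rightarrow> 'k"
  assumes hopf: "hopf_alg H" and comod: "comod H n u" and haar: "haar H h"
begin

lemma fin_u[simp]: "i < n \<Longrightarrow> j < n \<Longrightarrow> fin (u i j)"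
  using comod by (simp add: comod_def)
lemma Comul_u: "i < n \<Longrightarrow> j < n \<Longrightarrow> Comul H (u i j) = (\<lambda>p. \<Sum>l<n. tens (u i l) (u l j) p)"
  using comod by (simp add: comod_def)
lemma Counit_u: "i < n \<Longrightarrow> j < n \<Longrightarrow> Counit H (u i j) = (if i = j then 1 else 0)"
  using comod by (simp add: comod_def)

lemmas fMul = fin_Mul[OF hopf]
lemmas fAnti = fin_Anti[OF hopf]
declare fMul[simp] fAnti[simp] fin_tens[simp] fin_sum_lt[simp] fin_scale[simp]
lemmas Msl = Mul_sum_left_lt[OF hopf]
lemmas Msr = Mul_sum_right_lt[OF hopf]
lemmas Mcl = Mul_scale_left[OF hopf]
lemmas Mcr = Mul_scale_right[OF hopf]
lemmas Asum = Anti_sum_lt[OF hopf]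
lemmas Asc = Anti_scale[OF hopf]
lemma fhunit[simp]: "fin (hunit H)" using fin_hunit[OF hopf] .

lemma anti_left: assumes "i < n" "j < n"
  shows "(\<lambda>t. \<Sum>l<n. Mul H (Anti H (u i l)) (u l j) t) = (\<lambda>t. (if i = j then 1 else 0) * hunit H t)"
proof -
  have "lin (\<lambda>(a, b). Mul H (hanti H a) (bvec b)) (Comul H (u i j)) = (\<lambda>t. Counit H (u i j) * hunit H t)"
    using assms by (intro antipode_left[OF hopf]) simp
  moreover have "lin (\<lambda>(a, b). Mul H (hanti H a) (bvec b)) (Comul H (u i j)) = (\<lambda>t. \<Sum>l<n. Mul H (Anti H (u i l)) (u l j) t)"
    using assms unfolding Comul_u[OF assms]
    by (subst lin_sum) (auto simp: fin_tens antipode_tens_left[OF hopf])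
  ultimately show ?thesis using assms by (simp add: Counit_u)
qed

lemma anti_right: assumes "i < n" "j < n"
  shows "(\<lambda>t. \<Sum>l<n. Mul H (u i l) (Anti H (u l j)) t) = (\<lambda>t. (if i = j then 1 else 0) * hunit H t)"
proof -
  have "lin (\<lambda>(a, b). Mul H (bvec a) (hanti H b)) (Comul H (u i j)) = (\<lambda>t. Counit H (u i j) * hunit H t)"
    using assms by (intro antipode_right[OF hopf]) simp
  moreover have "lin (\<lambda>(a, b). Mul H (bvec a) (hanti H b)) (Comul H (u i j)) = (\<lambda>t. \<Sum>l<n. Mul H (u i l) (Anti H (u l j)) t)"
    using assms unfolding Comul_u[OF assms]
    by (subst lin_sum) (auto simp: fin_tens antipode_tens_right[OF hopf])
  ultimately show ?thesis using assms by (simp add: Counit_u)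
qed

lemma Comul_uu: assumes "a < n" "i < n" "b < n" "j < n"
  shows "Comul H (Mul H (u a i) (u b j)) =
    (\<lambda>p. \<Sum>r<n. \<Sum>s<n. tens (Mul H (u a r) (u b s)) (Mul H (u r i) (u s j)) p)"
proof -
  have "Comul H (Mul H (u a i) (u b j)) = Mul2 H (\<lambda>p. \<Sum>r<n. tens (u a r) (u r i) p) (\<lambda>p. \<Sum>s<n. tens (u b s) (u s j) p)"
    using assms by (simp add: Comul_Mul[OF hopf] Comul_u)
  also have "\<dots> = (\<lambda>p. \<Sum>r<n. \<Sum>s<n. Mul2 H (tens (u a r) (u r i)) (tens (u b s) (u s j)) p)"
    using assms by (simp add: Mul2_sum_left_lt[OF hopf] Mul2_sum_right_lt[OF hopf])
  also have "\<dots> = (\<lambda>p. \<Sum>r<n. \<Sum>s<n. tens (Mul H (u a r) (u b s)) (Mul H (u r i) (u s j)) p)"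
    using assms by (simp add: Mul2_tens[OF hopf])
  finally show ?thesis .
qed

lemma haar_L: assumes "a < n" "i < n" "b < n" "j < n"
  shows "(\<lambda>t. \<Sum>r<n. \<Sum>s<n. linf h (Mul H (u a r) (u b s)) * Mul H (u r i) (u s j) t)
     = (\<lambda>t. linf h (Mul H (u a i) (u b j)) * hunit H t)"
proof -
  have "lin (\<lambda>(a, b). (\<lambda>t. h a * bvec b t)) (Comul H (Mul H (u a i) (u b j))) = (\<lambda>t. linf h (Mul H (u a i) (u b j)) * hunit H t)"
    using haar fMul[of "u a i" "u b j"] assms unfolding haar_def by simp
  moreover have "lin (\<lambda>(a, b). (\<lambda>t. h a * bvec b t)) (Comul H (Mul H (u a i) (u b j))) =
     (\<lambda>t. \<Sum>r<n. \<Sum>s<n. linf h (Mul H (u a r) (u b s)) * Mul H (u r i) (u s j) t)"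
    using assms unfolding Comul_uu[OF assms]
    by (simp add: lin_sum_lt haar_fun_L)
  ultimately show ?thesis by simp
qed

lemma haar_R: assumes "a < n" "i < n" "b < n" "j < n"
  shows "(\<lambda>t. \<Sum>r<n. \<Sum>s<n. Mul H (u a r) (u b s) t * linf h (Mul H (u r i) (u s j)))
     = (\<lambda>t. linf h (Mul H (u a i) (u b j)) * hunit H t)"
proof -
  have "lin (\<lambda>(a, b). (\<lambda>t. bvec a t * h b)) (Comul H (Mul H (u a i) (u b j))) = (\<lambda>t. linf h (Mul H (u a i) (u b j)) * hunit H t)"
    using haar fMul[of "u a i" "u b j"] assms unfolding haar_def by simp
  moreover have "lin (\<lambda>(a, b). (\<lambda>t. bvec a t * h b)) (Comul H (Mul H (u a i) (u b j))) =
     (\<lambda>t. \<Sum>r<n. \<Sum>s<n. Mul H (u a r) (u b s) t * linf h (Mul H (u r i) (u s j)))"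
    using assms unfolding Comul_uu[OF assms]
    by (simp add: lin_sum_lt haar_fun_R)
  ultimately show ?thesis by simp
qed

end

context cm begin

lemmas Mul1l = Mul_unit_left[OF hopf]
lemmas Mul1r = Mul_unit_right[OF hopf]
lemmas Massoc = Mul_assoc[OF hopf]

lemma swap3: "(\<Sum>j\<in>A. \<Sum>p\<in>B. \<Sum>q\<in>C. (f j p q::'k)) = (\<Sum>p\<in>B. \<Sum>q\<in>C. \<Sum>j\<in>A. f j p q)"
proof -
  have "(\<Sum>j\<in>A. \<Sum>p\<in>B. \<Sum>q\<in>C. f j p q) = (\<Sum>p\<in>B. \<Sum>j\<in>A. \<Sum>q\<in>C. f j p q)" by (rule sum.swap)
  also have "\<dots> = (\<Sum>p\<in>B. \<Sum>q\<in>C. \<Sum>j\<in>A. f j p q)" by (rule sum.cong[OF refl], rule sum.swap)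
  finally show ?thesis .
qed

definition derived :: "(nat \<Rightarrow> nat \<Rightarrow> 'k) \<Rightarrow> bool" where
  "derived E \<longleftrightarrow> (\<forall>i<n. \<forall>m<n. \<forall>t. (\<Sum>p<n. E p m * u p i t) = (\<Sum>j<n. E i j * Anti H (u j m) t))"

lemma colin_pt: "colinear_form H n u E \<Longrightarrow> i < n \<Longrightarrow> j < n \<Longrightarrow>
   (\<Sum>p<n. \<Sum>q<n. E p q * Mul H (u p i) (u q j) t) = E i j * hunit H t"
  unfolding colinear_form_def by (metis (mono_tags))

lemma anti_right_pt: "i < n \<Longrightarrow> j < n \<Longrightarrow> (\<Sum>l<n. Mul H (u i l) (Anti H (u l j)) t) = (if i = j then 1 else 0) * hunit H t"
  using anti_right by metis
lemma anti_left_pt: "i < n \<Longrightarrow> j < n \<Longrightarrow> (\<Sum>l<n. Mul H (Anti H (u i l)) (u l j) t) = (if i = j then 1 else 0) * hunit H t"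
  using anti_left by metis

lemma D1: assumes c: "colinear_form H n u E" shows "derived E"
  unfolding derived_def
proof (intro allI impI)
  fix i m t assume i: "i < n" and m: "m < n"
  have "(\<Sum>j<n. E i j * Anti H (u j m) t) = (\<Sum>j<n. Mul H (\<lambda>s. E i j * hunit H s) (Anti H (u j m)) t)"
    using m by (simp add: Mcl Mul1l)
  also have "\<dots> = (\<Sum>j<n. Mul H (\<lambda>s. \<Sum>p<n. \<Sum>q<n. E p q * Mul H (u p i) (u q j) s) (Anti H (u j m)) t)"
    using colin_pt[OF c i] by (intro sum.cong refl) (simp add: fun_eq_iff)
  also have "\<dots> = (\<Sum>j<n. \<Sum>p<n. \<Sum>q<n. E p q * Mul H (Mul H (u p i) (u q j)) (Anti H (u j m)) t)"
    using i m by (intro sum.cong refl) (simp add: Msl Mcl)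
  also have "\<dots> = (\<Sum>j<n. \<Sum>p<n. \<Sum>q<n. E p q * Mul H (u p i) (Mul H (u q j) (Anti H (u j m))) t)"
    using i m by (intro sum.cong refl) (simp add: Massoc)
  also have "\<dots> = (\<Sum>p<n. \<Sum>q<n. E p q * (\<Sum>j<n. Mul H (u p i) (Mul H (u q j) (Anti H (u j m))) t))"
    unfolding sum_distrib_left by (rule swap3)
  also have "\<dots> = (\<Sum>p<n. \<Sum>q<n. E p q * Mul H (u p i) (\<lambda>s. \<Sum>j<n. Mul H (u q j) (Anti H (u j m)) s) t)"
    using i m by (intro sum.cong refl) (simp add: Msr)
  also have "\<dots> = (\<Sum>p<n. \<Sum>q<n. E p q * Mul H (u p i) (\<lambda>s. (if q = m then 1 else 0) * hunit H s) t)"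
    using m by (intro sum.cong refl) (simp add: anti_right_pt)
  also have "\<dots> = (\<Sum>p<n. \<Sum>q<n. E p q * ((if q = m then 1 else 0) * u p i t))"
    using i m by (intro sum.cong refl) (simp add: Mcr Mul1r)
  also have "\<dots> = (\<Sum>p<n. E p m * u p i t)"
    using m by (simp add: if_distrib if_distribR sum.delta cong: if_cong)
  finally show "(\<Sum>p<n. E p m * u p i t) = (\<Sum>j<n. E i j * Anti H (u j m) t)" ..
qed

lemma D2: assumes d: "derived E" shows "colinear_form H n u E"
  unfolding colinear_form_def
proof (intro allI impI ext)
  fix i k t assume i: "i < n" and k: "k < n"
  have dd: "q < n \<Longrightarrow> (\<lambda>s. \<Sum>p<n. E p q * u p i s) = (\<lambda>s. \<Sum>j<n. E i j * Anti H (u j q) s)" for q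
    using d i unfolding derived_def by auto
  have "(\<Sum>p<n. \<Sum>q<n. E p q * Mul H (u p i) (u q k) t) = (\<Sum>q<n. Mul H (\<lambda>s. \<Sum>p<n. E p q * u p i s) (u q k) t)"
    using i k by (simp add: Msl Mcl) (rule sum.swap)
  also have "\<dots> = (\<Sum>q<n. Mul H (\<lambda>s. \<Sum>j<n. E i j * Anti H (u j q) s) (u q k) t)"
    by (intro sum.cong refl) (simp add: dd)
  also have "\<dots> = (\<Sum>q<n. \<Sum>j<n. E i j * Mul H (Anti H (u j q)) (u q k) t)"
    using i k by (intro sum.cong refl) (simp add: Msl Mcl)
  also have "\<dots> = (\<Sum>j<n. E i j * (\<Sum>q<n. Mul H (Anti H (u j q)) (u q k) t))"
    by (simp add: sum_distrib_left) (rule sum.swap)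
  also have "\<dots> = (\<Sum>j<n. E i j * ((if j = k then 1 else 0) * hunit H t))"
    using k by (intro sum.cong refl) (simp add: anti_left_pt)
  also have "\<dots> = E i k * hunit H t"
    using k by (simp add: if_distrib if_distribR sum.delta cong: if_cong)
  finally show "(\<Sum>p<n. \<Sum>q<n. E p q * Mul H (u p i) (u q k) t) = E i k * hunit H t" .
qed

end

lemma eig_exists:
  fixes N :: "nat \<Rightarrow> nat \<Rightarrow> 'k::alg_closed_field"
  assumes n: "n > 0"
  shows "\<exists>c v. (\<exists>i<n. v i \<noteq> 0) \<and> (\<forall>i<n. (\<Sum>j<n. N i j * v j) = c * v i)"
proof -
  define A where "A = mat n n (\<lambda>(i,j). N i j)"
  have A: "A \<in> carrier_mat n n" unfolding A_def by auto
  have "degree (char_poly A) > 0" using degree_monic_char_poly[OF A] n by auto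
  then obtain c where "poly (char_poly A) c = 0" using alg_closed_imp_poly_has_root by blast
  then have "eigenvalue A c" using eigenvalue_root_char_poly[OF A] by auto
  then obtain w where w: "eigenvector A w c" unfolding eigenvalue_def by auto
  then have wc: "w \<in> carrier_vec n" "w \<noteq> 0\<^sub>v n" "A *\<^sub>v w = c \<cdot>\<^sub>v w" unfolding eigenvector_def using A by auto
  have "\<exists>i<n. w $ i \<noteq> 0"
  proof (rule ccontr)
    assume "\<not> ?thesis"
    then have "w = 0\<^sub>v n" using wc(1) by (intro eq_vecI) auto
    then show False using wc(2) by auto
  qed
  moreover have "\<forall>i<n. (\<Sum>j<n. N i j * w $ j) = c * w $ i"
  proof (intro allI impI)
    fix i assume i: "i < n"
    have "(A *\<^sub>v w) $ i = (c \<cdot>\<^sub>v w) $ i" using wc(3) by simp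
    then show "(\<Sum>j<n. N i j * w $ j) = c * w $ i"
      using i wc(1) unfolding A_def by (simp add: mult_mat_vec_def scalar_prod_def atLeast0LessThan)
  qed
  ultimately show ?thesis by blast
qed

lemma la_dich:
  fixes M :: "nat \<Rightarrow> nat \<Rightarrow> 'k::field"
  shows "invertible n M \<or> (\<exists>v. (\<exists>i<n. v i \<noteq> 0) \<and> (\<forall>j<n. (\<Sum>i<n. v i * M i j) = 0))"
proof (cases "det (mat n n (\<lambda>(i,j). M i j)) = 0")
  case True
  define A where "A = mat n n (\<lambda>(i,j). M i j)"
  have A: "A \<in> carrier_mat n n" unfolding A_def by auto
  have "det (transpose_mat A) = 0" using True det_transpose[OF A] unfolding A_def by simp
  then obtain w where wc: "w \<in> carrier_vec n" "w \<noteq> 0\<^sub>v n" "transpose_mat A *\<^sub>v w = 0\<^sub>v n"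
    using det_0_iff_vec_prod_zero[of "transpose_mat A" n] A by auto
  have "\<exists>i<n. w $ i \<noteq> 0"
  proof (rule ccontr)
    assume "\<not> ?thesis"
    then have "w = 0\<^sub>v n" using wc(1) by (intro eq_vecI) auto
    then show False using wc(2) by auto
  qed
  moreover have "\<forall>j<n. (\<Sum>i<n. w $ i * M i j) = 0"
  proof (intro allI impI)
    fix j assume j: "j < n"
    have "(transpose_mat A *\<^sub>v w) $ j = 0" using wc(3) j by simp
    then show "(\<Sum>i<n. w $ i * M i j) = 0"
      using j wc(1) unfolding A_def by (simp add: mult_mat_vec_def scalar_prod_def atLeast0LessThan mult.commute)
  qed
  ultimately show ?thesis by blast
next
  case False
  define A where "A = mat n n (\<lambda>(i,j). M i j)"
  have A: "A \<in> carrier_mat n n" unfolding A_def by auto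
  have "A \<in> Units (ring_mat TYPE('k) n n)" using det_non_zero_imp_unit[OF A] False unfolding A_def by auto
  then obtain Q where Q: "Q \<in> carrier_mat n n" "Q * A = 1\<^sub>m n" "A * Q = 1\<^sub>m n"
    unfolding Units_def ring_mat_def by auto
  have "mat_inverse_of n M (\<lambda>i j. Q $$ (i,j))"
    unfolding mat_inverse_of_def
  proof (intro allI impI conjI)
    fix i j assume i: "i < n" and j: "j < n"
    have "(A * Q) $$ (i,j) = 1\<^sub>m n $$ (i,j)" using Q by simp
    then show "(\<Sum>l<n. M i l * Q $$ (l, j)) = (if i = j then 1 else 0)"
      using i j Q(1) unfolding A_def by (simp add: scalar_prod_def atLeast0LessThan)
    have "(Q * A) $$ (i,j) = 1\<^sub>m n $$ (i,j)" using Q by simp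
    then show "(\<Sum>l<n. Q $$ (i, l) * M l j) = (if i = j then 1 else 0)"
      using i j Q(1) unfolding A_def by (simp add: scalar_prod_def atLeast0LessThan)
  qed
  then show ?thesis unfolding invertible_def by blast
qed

context cm begin

lemma kernel:
  assumes sc: "simple_comod H n u" and c: "colinear_form H n u E"
    and v: "\<exists>i<n. v i \<noteq> 0" and vk: "\<forall>j<n. (\<Sum>i<n. v i * E i j) = 0"
  shows "\<forall>i<n. \<forall>j<n. E i j = 0"
proof -
  have d: "derived E" using D1[OF c] .
  define W where "W = {w. w \<in> vspace n \<and> (\<forall>b<n. (\<Sum>i<n. w i * E i b) = 0)}"
  have sub: "subcomod n u W"
    unfolding subcomod_def
  proof (intro conjI ballI allI)
    show "W \<subseteq> vspace n" unfolding W_def by auto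
    show "(\<lambda>_. 0) \<in> W" unfolding W_def vspace_def by auto
  next
    fix x y assume "x \<in> W" "y \<in> W"
    then show "(\<lambda>i. x i + y i) \<in> W" unfolding W_def vspace_def
      by (auto simp: distrib_right sum.distrib)
  next
    fix c x assume "x \<in> W"
    then show "(\<lambda>i. c * x i) \<in> W" unfolding W_def vspace_def
      by (auto simp: mult.assoc sum_distrib_left[symmetric])
  next
    fix w t assume w: "w \<in> W"
    show "(\<lambda>i. if i < n then \<Sum>j<n. w j * u i j t else 0) \<in> W"
      unfolding W_def
    proof (intro CollectI conjI allI impI)
      show "(\<lambda>i. if i < n then \<Sum>j<n. w j * u i j t else 0) \<in> vspace n" by (simp add: vspace_def)
    next
      fix b assume b: "b < n"
      have "(\<Sum>i<n. (if i < n then \<Sum>j<n. w j * u i j t else 0) * E i b)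
          = (\<Sum>i<n. \<Sum>a<n. w a * (E i b * u i a t))"
        by (intro sum.cong refl) (simp add: sum_distrib_left sum_distrib_right mult_ac)
      also have "\<dots> = (\<Sum>a<n. w a * (\<Sum>i<n. E i b * u i a t))"
        by (simp add: sum_distrib_left) (rule sum.swap)
      also have "\<dots> = (\<Sum>a<n. w a * (\<Sum>j<n. E a j * Anti H (u j b) t))"
        using d b unfolding derived_def by (intro sum.cong refl) auto
      also have "\<dots> = (\<Sum>j<n. (\<Sum>a<n. w a * E a j) * Anti H (u j b) t)"
        by (simp add: sum_distrib_left sum_distrib_right mult_ac) (rule sum.swap)
      also have "\<dots> = 0" using w unfolding W_def by simp
      finally show "(\<Sum>i<n. (if i < n then \<Sum>j<n. w j * u i j t else 0) * E i b) = 0" .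
    qed
  qed
  define v' where "v' = (\<lambda>i. if i < n then v i else 0)"
  have v'W: "v' \<in> W" unfolding W_def v'_def vspace_def using vk by simp
  have "v' \<noteq> (\<lambda>_. 0)" using v unfolding v'_def by (auto simp: fun_eq_iff)
  then have "W \<noteq> {\<lambda>_. 0}" using v'W by auto
  then have WV: "W = vspace n" using sc sub unfolding simple_comod_def by blast
  show ?thesis
  proof (intro allI impI)
    fix i j assume i: "i < n" and j: "j < n"
    have "(\<lambda>l. if l = i then 1 else 0) \<in> W" using WV i by (simp add: vspace_def)
    then have "(\<Sum>l<n. (if l = i then 1 else 0) * E l j) = 0" using j unfolding W_def by auto
    then show "E i j = 0" using i by (simp add: if_distrib if_distribR sum.delta cong: if_cong)
  qed
qed

lemma colin_comb:
  assumes "colinear_form H n u E" "colinear_form H n u E'"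
  shows "colinear_form H n u (\<lambda>i j. E' i j - c * E i j)"
  unfolding colinear_form_def
proof (intro allI impI ext)
  fix i j t assume i: "i < n" and j: "j < n"
  have "(\<Sum>p<n. \<Sum>q<n. (E' p q - c * E p q) * Mul H (u p i) (u q j) t)
     = (\<Sum>p<n. \<Sum>q<n. E' p q * Mul H (u p i) (u q j) t) - c * (\<Sum>p<n. \<Sum>q<n. E p q * Mul H (u p i) (u q j) t)"
    by (simp add: left_diff_distrib sum_subtractf sum_distrib_left mult.assoc)
  also have "\<dots> = (E' i j - c * E i j) * hunit H t"
    using colin_pt[OF assms(1) i j] colin_pt[OF assms(2) i j] by (simp add: algebra_simps)
  finally show "(\<Sum>p<n. \<Sum>q<n. (E' p q - c * E p q) * Mul H (u p i) (u q j) t) = (E' i j - c * E i j) * hunit H t" .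
qed

end

locale cma = cm H n u h
  for H :: "('i, 'k::{alg_closed_field, field_char_0}) hopf" and n u h

lemma (in cma) schur:
  assumes sc: "simple_comod H n u" and c: "colinear_form H n u E" and inv: "mat_inverse_of n E G"
    and c': "colinear_form H n u E'"
  shows "\<exists>l. \<forall>i<n. \<forall>j<n. E' i j = l * E i j"
proof -
  have n: "n > 0" using sc unfolding simple_comod_def by auto
  define N where "N = (\<lambda>i j. \<Sum>l<n. G l i * E' j l)"
  obtain c v where v: "\<exists>i<n. v i \<noteq> 0" and ev: "\<forall>i<n. (\<Sum>j<n. N i j * v j) = c * v i"
    using eig_exists[OF n, of N] by blast
  have GE: "\<And>l j. l < n \<Longrightarrow> j < n \<Longrightarrow> (\<Sum>i<n. G l i * E i j) = (if l = j then 1 else 0)"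
    using inv unfolding mat_inverse_of_def by auto
  have kv: "\<forall>j<n. (\<Sum>i<n. v i * (E' i j - c * E i j)) = 0"
  proof (intro allI impI)
    fix j assume j: "j < n"
    have "c * (\<Sum>i<n. v i * E i j) = (\<Sum>i<n. (c * v i) * E i j)"
      by (simp add: sum_distrib_left mult_ac)
    also have "\<dots> = (\<Sum>i<n. (\<Sum>j'<n. N i j' * v j') * E i j)"
      using ev by simp
    also have "\<dots> = (\<Sum>i<n. \<Sum>j'<n. \<Sum>l<n. v j' * E' j' l * (G l i * E i j))"
      unfolding N_def by (simp only: sum_distrib_right) (simp add: mult_ac)
    also have "\<dots> = (\<Sum>j'<n. \<Sum>l<n. v j' * E' j' l * (\<Sum>i<n. G l i * E i j))"
      unfolding sum_distrib_left by (rule swap3)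
    also have "\<dots> = (\<Sum>j'<n. \<Sum>l<n. v j' * E' j' l * (if l = j then 1 else 0))"
      using j GE by simp
    also have "\<dots> = (\<Sum>i<n. v i * E' i j)"
      using j by (simp add: if_distrib if_distribR sum.delta cong: if_cong)
    finally show "(\<Sum>i<n. v i * (E' i j - c * E i j)) = 0"
      by (simp add: right_diff_distrib sum_subtractf sum_distrib_left mult_ac)
  qed
  have "\<forall>i<n. \<forall>j<n. E' i j - c * E i j = 0"
    using kernel[OF sc colin_comb[OF c c'] v kv] .
  then show ?thesis by auto
qed

lemma swap3g: "(\<Sum>j\<in>A. \<Sum>p\<in>B. \<Sum>q\<in>C. (f j p q::'k::comm_monoid_add)) = (\<Sum>p\<in>B. \<Sum>q\<in>C. \<Sum>j\<in>A. f j p q)"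
proof -
  have "(\<Sum>j\<in>A. \<Sum>p\<in>B. \<Sum>q\<in>C. f j p q) = (\<Sum>p\<in>B. \<Sum>j\<in>A. \<Sum>q\<in>C. f j p q)" by (rule sum.swap)
  also have "\<dots> = (\<Sum>p\<in>B. \<Sum>q\<in>C. \<Sum>j\<in>A. f j p q)" by (rule sum.cong[OF refl], rule sum.swap)
  finally show ?thesis .
qed

lemma swap4: "(\<Sum>x\<in>A. \<Sum>b\<in>B. \<Sum>r\<in>C. \<Sum>s\<in>D. (f x b r s::'k::comm_monoid_add)) = (\<Sum>r\<in>C. \<Sum>s\<in>D. \<Sum>x\<in>A. \<Sum>b\<in>B. f x b r s)"
proof -
  have "(\<Sum>x\<in>A. \<Sum>b\<in>B. \<Sum>r\<in>C. \<Sum>s\<in>D. f x b r s) = (\<Sum>x\<in>A. \<Sum>r\<in>C. \<Sum>s\<in>D. \<Sum>b\<in>B. f x b r s)"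
    by (rule sum.cong[OF refl], rule swap3g)
  also have "\<dots> = (\<Sum>r\<in>C. \<Sum>s\<in>D. \<Sum>x\<in>A. \<Sum>b\<in>B. f x b r s)" by (rule swap3g)
  finally show ?thesis .
qed

context cm begin

lemma inv_transpose: "mat_inverse_of n E G \<Longrightarrow> mat_inverse_of n (\<lambda>i j. E j i) (\<lambda>i j. G j i)"
  unfolding mat_inverse_of_def by (auto simp: mult.commute)

lemma colin_selfdual: assumes c: "colinear_form H n u E" and inv: "invertible n E"
  shows "self_dual H n u"
proof -
  have d: "derived E" using D1[OF c] .
  obtain G where G: "mat_inverse_of n E G" using inv unfolding invertible_def by auto
  have "invertible n (\<lambda>i j. E j i)" using inv_transpose[OF G] unfolding invertible_def by blast
  moreover have "\<forall>i<n. \<forall>j<n. (\<lambda>t. \<Sum>l<n. E l i * u l j t) = (\<lambda>t. \<Sum>l<n. dual_comod H n u i l t * E j l)"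
    using d unfolding derived_def dual_comod_def by (auto simp: fun_eq_iff mult.commute)
  ultimately show ?thesis unfolding self_dual_def iso_comod_def by blast
qed

lemma selfdual_colin: assumes "self_dual H n u"
  shows "\<exists>E. colinear_form H n u E \<and> invertible n E"
proof -
  obtain P where P: "invertible n P"
    and iso: "\<forall>i<n. \<forall>j<n. (\<lambda>t. \<Sum>l<n. P i l * u l j t) = (\<lambda>t. \<Sum>l<n. Anti H (u l i) t * P l j)"
    using assms unfolding self_dual_def iso_comod_def dual_comod_def by blast
  obtain Q where Q: "mat_inverse_of n P Q" using P unfolding invertible_def by auto
  have "derived (\<lambda>i j. P j i)"
    unfolding derived_def
  proof (intro allI impI)
    fix i m t assume "i < n" "m < n"
    then have "(\<Sum>l<n. P m l * u l i t) = (\<Sum>l<n. Anti H (u l m) t * P l i)" using iso by metis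
    then show "(\<Sum>p<n. P m p * u p i t) = (\<Sum>j<n. P j i * Anti H (u j m) t)" by (simp add: mult.commute)
  qed
  moreover have "invertible n (\<lambda>i j. P j i)" using inv_transpose[OF Q] unfolding invertible_def by blast
  ultimately show ?thesis using D2 by blast
qed

lemma Phi_colin: "a < n \<Longrightarrow> b < n \<Longrightarrow> colinear_form H n u (\<lambda>i j. linf h (Mul H (u a i) (u b j)))"
  unfolding colinear_form_def using haar_L by auto

end

context cma begin

lemma part1: assumes sc: "simple_comod H n u" and nsd: "\<not> self_dual H n u"
  shows "nu2 H h n u = 0"
proof -
  have z: "linf h (Mul H (u a i) (u b j)) = 0" if "a < n" "b < n" "i < n" "j < n" for a b i j
  proof -
    let ?P = "\<lambda>i j. linf h (Mul H (u a i) (u b j))"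
    have c: "colinear_form H n u ?P" using Phi_colin that by auto
    from la_dich[of n ?P] show ?thesis
    proof
      assume "invertible n ?P"
      then have "self_dual H n u" using colin_selfdual c by blast
      then show ?thesis using nsd by blast
    next
      assume "\<exists>v. (\<exists>i<n. v i \<noteq> 0) \<and> (\<forall>j<n. (\<Sum>i<n. v i * ?P i j) = 0)"
      then obtain v where "\<exists>i<n. v i \<noteq> 0" "\<forall>j<n. (\<Sum>i<n. v i * ?P i j) = 0" by blast
      from kernel[OF sc c this] that show ?thesis by blast
    qed
  qed
  show ?thesis unfolding nu2_def by (simp add: z)
qed

end

context cma begin

lemma part2: assumes sc: "simple_comod H n u" and c: "colinear_form H n u E" and inv: "mat_inverse_of n E G"
  shows "nu2 H h n u = of_nat n / (\<Sum>i<n. \<Sum>l<n. E i l * G i l)"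
proof -
  have n: "n > 0" using sc unfolding simple_comod_def by auto
  have EG: "\<And>i j. i < n \<Longrightarrow> j < n \<Longrightarrow> (\<Sum>l<n. E i l * G l j) = (if i = j then 1 else 0)"
    and GE: "\<And>i j. i < n \<Longrightarrow> j < n \<Longrightarrow> (\<Sum>l<n. G i l * E l j) = (if i = j then 1 else 0)"
    using inv unfolding mat_inverse_of_def by auto
  have d: "derived E" using D1[OF c] .
  obtain i0 j0 where i0: "i0 < n" and j0: "j0 < n" and e0: "E i0 j0 \<noteq> 0"
  proof (rule ccontr)
    assume "\<not> thesis"
    then have "\<forall>i<n. \<forall>j<n. E i j = 0" using that by blast
    then have "(\<Sum>l<n. E 0 l * G l 0) = 0" by simp
    then show False using EG[of 0 0] n by simp
  qed
  define C where "C = (\<lambda>a b. SOME l. \<forall>i<n. \<forall>j<n. linf h (Mul H (u a i) (u b j)) = l * E i j)"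
  have C: "linf h (Mul H (u a i) (u b j)) = C a b * E i j" if "a < n" "b < n" "i < n" "j < n" for a b i j
  proof -
    have "\<exists>l. \<forall>i<n. \<forall>j<n. linf h (Mul H (u a i) (u b j)) = l * E i j"
      using schur[OF sc c inv Phi_colin[OF that(1,2)]] .
    from someI_ex[OF this] show ?thesis using that unfolding C_def by blast
  qed
  have h1: "linf h (hunit H) = 1" using haar unfolding haar_def by simp
  have CE1: "(\<Sum>p<n. \<Sum>q<n. E p q * C p q) = 1"
  proof -
    have fe: "(\<lambda>t. \<Sum>p<n. \<Sum>q<n. E p q * Mul H (u p i0) (u q j0) t) = (\<lambda>t. E i0 j0 * hunit H t)"
      using c i0 j0 unfolding colinear_form_def by blast
    have "linf h (\<lambda>t. \<Sum>p<n. \<Sum>q<n. E p q * Mul H (u p i0) (u q j0) t) = (\<Sum>p<n. \<Sum>q<n. E p q * linf h (Mul H (u p i0) (u q j0)))"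
      using i0 j0 by (simp add: linf_sum_lt linf_scale)
    also have "\<dots> = (\<Sum>p<n. \<Sum>q<n. E p q * C p q) * E i0 j0"
      using i0 j0 unfolding sum_distrib_right by (simp add: C mult_ac)
    finally have "(\<Sum>p<n. \<Sum>q<n. E p q * C p q) * E i0 j0 = E i0 j0"
      using fe h1 by (simp add: linf_scale)
    then show ?thesis using e0 by simp
  qed
  have dualC: "(\<Sum>r<n. \<Sum>s<n. C r s * Mul H (u a r) (u b s) t) = C a b * hunit H t"
    if a: "a < n" and b: "b < n" for a b t
  proof -
    have "(\<Sum>r<n. \<Sum>s<n. Mul H (u a r) (u b s) t * linf h (Mul H (u r i0) (u s j0))) = linf h (Mul H (u a i0) (u b j0)) * hunit H t"
      using fun_cong[OF haar_R[OF a i0 b j0], of t] by simp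
    then have "(\<Sum>r<n. \<Sum>s<n. C r s * Mul H (u a r) (u b s) t) * E i0 j0 = (C a b * hunit H t) * E i0 j0"
      using a b i0 j0 unfolding sum_distrib_right by (simp add: C mult_ac)
    then show ?thesis using e0 by simp
  qed
  define D where "D = (\<lambda>r z. \<Sum>m<n. C r m * E m z)"
  have comm: "(\<Sum>r<n. D r z * u a r t) = (\<Sum>x<n. D a x * u x z t)" if a: "a < n" and z: "z < n" for a z t
  proof -
    have inner: "(\<Sum>x<n. \<Sum>b<n. E b x * Mul H (u a r) (Mul H (u b s') (u x z)) t) = E s' z * u a r t"
      if r: "r < n" and s': "s' < n" for r s'
    proof -
      have "(\<Sum>x<n. \<Sum>b<n. E b x * Mul H (u a r) (Mul H (u b s') (u x z)) t)
          = (\<Sum>x<n. Mul H (u a r) (Mul H (\<lambda>s. \<Sum>b<n. E b x * u b s' s) (u x z)) t)"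
        using a r s' z by (intro sum.cong refl) (simp add: Msl Mcl Msr Mcr)
      also have "\<dots> = (\<Sum>x<n. Mul H (u a r) (Mul H (\<lambda>s. \<Sum>j<n. E s' j * Anti H (u j x) s) (u x z)) t)"
        using d s' unfolding derived_def by (intro sum.cong refl) (simp add: fun_eq_iff)
      also have "\<dots> = (\<Sum>x<n. \<Sum>j<n. E s' j * Mul H (u a r) (Mul H (Anti H (u j x)) (u x z)) t)"
        using a r s' z by (intro sum.cong refl) (simp add: Msl Mcl Msr Mcr)
      also have "\<dots> = (\<Sum>j<n. E s' j * (\<Sum>x<n. Mul H (u a r) (Mul H (Anti H (u j x)) (u x z)) t))"
        by (simp add: sum_distrib_left) (rule sum.swap)
      also have "\<dots> = (\<Sum>j<n. E s' j * Mul H (u a r) (\<lambda>s. \<Sum>x<n. Mul H (Anti H (u j x)) (u x z) s) t)"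
        using a r z by (intro sum.cong refl) (simp add: Msr)
      also have "\<dots> = (\<Sum>j<n. E s' j * Mul H (u a r) (\<lambda>s. (if j = z then 1 else 0) * hunit H s) t)"
        using z by (intro sum.cong refl) (simp add: anti_left_pt)
      also have "\<dots> = (\<Sum>j<n. E s' j * ((if j = z then 1 else 0) * u a r t))"
        using a r by (intro sum.cong refl) (simp add: Mcr Mul1r)
      also have "\<dots> = E s' z * u a r t"
        using z by (simp add: if_distrib if_distribR sum.delta cong: if_cong)
      finally show ?thesis .
    qed
    define X where "X = (\<Sum>x<n. \<Sum>b<n. E b x * Mul H (\<lambda>s. \<Sum>r<n. \<Sum>s'<n. C r s' * Mul H (u a r) (u b s') s) (u x z) t)"
    have "X = (\<Sum>x<n. \<Sum>b<n. E b x * Mul H (\<lambda>s. C a b * hunit H s) (u x z) t)"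
      unfolding X_def using a dualC by (intro sum.cong refl) (simp add: fun_eq_iff)
    also have "\<dots> = (\<Sum>x<n. \<Sum>b<n. E b x * (C a b * u x z t))"
      using z by (intro sum.cong refl) (simp add: Mcl Mul1l)
    also have "\<dots> = (\<Sum>x<n. D a x * u x z t)"
      unfolding D_def by (simp add: sum_distrib_right sum_distrib_left mult_ac)
    finally have X1: "X = (\<Sum>x<n. D a x * u x z t)" .
    have "X = (\<Sum>x<n. \<Sum>b<n. \<Sum>r<n. \<Sum>s'<n. C r s' * (E b x * Mul H (u a r) (Mul H (u b s') (u x z)) t))"
      unfolding X_def using a z by (intro sum.cong refl) (simp add: Msl Mcl Massoc sum_distrib_left mult_ac)
    also have "\<dots> = (\<Sum>r<n. \<Sum>s'<n. C r s' * (\<Sum>x<n. \<Sum>b<n. E b x * Mul H (u a r) (Mul H (u b s') (u x z)) t))"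
      by (subst swap4) (simp add: sum_distrib_left)
    also have "\<dots> = (\<Sum>r<n. \<Sum>s'<n. C r s' * (E s' z * u a r t))"
      using inner by simp
    also have "\<dots> = (\<Sum>r<n. D r z * u a r t)"
      unfolding D_def by (simp add: sum_distrib_right sum_distrib_left mult_ac)
    finally show ?thesis using X1 by simp
  qed
  define ED where "ED = (\<lambda>p q. \<Sum>m<n. E p m * D m q)"
  have cED: "colinear_form H n u ED"
    unfolding colinear_form_def
  proof (intro allI impI ext)
    fix i j t assume i: "i < n" and j: "j < n"
    have "(\<Sum>p<n. \<Sum>q<n. ED p q * Mul H (u p i) (u q j) t) = (\<Sum>p<n. \<Sum>m<n. E p m * Mul H (u p i) (\<lambda>s. \<Sum>q<n. D m q * u q j s) t)"
      unfolding ED_def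
      apply (rule sum.cong[OF refl])
      using i j apply (simp add: Msr Mcr sum_distrib_left sum_distrib_right mult_ac)
      apply (rule sum.swap)
      done
    also have "\<dots> = (\<Sum>p<n. \<Sum>m<n. E p m * Mul H (u p i) (\<lambda>s. \<Sum>x<n. D x j * u m x s) t)"
      using comm j by (intro sum.cong refl) (simp add: fun_eq_iff)
    also have "\<dots> = (\<Sum>x<n. D x j * (\<Sum>p<n. \<Sum>m<n. E p m * Mul H (u p i) (u m x) t))"
      using i j apply (simp add: Msr Mcr sum_distrib_left mult_ac)
      apply (rule swap3g[symmetric])
      done
    also have "\<dots> = (\<Sum>x<n. D x j * (E i x * hunit H t))"
      using colin_pt[OF c i] by simp
    also have "\<dots> = ED i j * hunit H t"
      unfolding ED_def sum_distrib_right by (simp add: mult_ac)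
    finally show "(\<Sum>p<n. \<Sum>q<n. ED p q * Mul H (u p i) (u q j) t) = ED i j * hunit H t" .
  qed
  obtain l where l: "\<And>i j. i < n \<Longrightarrow> j < n \<Longrightarrow> ED i j = l * E i j"
    using schur[OF sc c inv cED] by blast
  have Dl: "D a b = l * (if a = b then 1 else 0)" if "a < n" "b < n" for a b
  proof -
    have "D a b = (\<Sum>m<n. (\<Sum>i<n. G a i * E i m) * D m b)"
      using that by (simp add: GE if_distrib if_distribR sum.delta cong: if_cong)
    also have "\<dots> = (\<Sum>i<n. G a i * ED i b)"
      unfolding ED_def by (simp add: sum_distrib_left sum_distrib_right mult_ac) (rule sum.swap)
    also have "\<dots> = (\<Sum>i<n. G a i * (l * E i b))" using that l by simp
    also have "\<dots> = l * (\<Sum>i<n. G a i * E i b)"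
      by (simp add: sum_distrib_left mult_ac)
    also have "\<dots> = l * (if a = b then 1 else 0)"
      using GE[OF that] by simp
    finally show ?thesis .
  qed
  have Cl: "C a b = l * G a b" if "a < n" "b < n" for a b
  proof -
    have "C a b = (\<Sum>m<n. C a m * (\<Sum>z<n. E m z * G z b))"
      using that by (simp add: EG if_distrib if_distribR sum.delta cong: if_cong)
    also have "\<dots> = (\<Sum>z<n. D a z * G z b)"
      unfolding D_def by (simp add: sum_distrib_left sum_distrib_right mult_ac) (rule sum.swap)
    also have "\<dots> = (\<Sum>z<n. l * (if a = z then 1 else 0) * G z b)" using that Dl by simp
    also have "\<dots> = l * G a b" using that by (simp add: if_distrib if_distribR sum.delta cong: if_cong)
    finally show ?thesis .
  qed
  have T: "l * (\<Sum>i<n. \<Sum>j<n. E i j * G i j) = 1"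
    using CE1 Cl by (simp add: sum_distrib_left mult_ac)
  have "nu2 H h n u = (\<Sum>i<n. \<Sum>j<n. C j i * E i j)"
    unfolding nu2_def by (simp add: C)
  also have "\<dots> = l * (\<Sum>j<n. \<Sum>i<n. G j i * E i j)"
    by (simp add: Cl sum_distrib_left mult_ac) (rule sum.swap)
  also have "\<dots> = l * of_nat n" using GE by simp
  finally have "nu2 H h n u = l * of_nat n" .
  moreover have "(\<Sum>i<n. \<Sum>j<n. E i j * G i j) \<noteq> 0" using T by auto
  ultimately show ?thesis using T by (simp add: field_simps)
qed

end

context cma begin

lemma part3_sym:
  assumes sc: "simple_comod H n u" and S2: "\<forall>x. fin x \<longrightarrow> Anti H (Anti H x) = x"
    and c: "colinear_form H n u E" and inv: "mat_inverse_of n E G"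
  shows "\<exists>l. (l = 1 \<or> l = -1) \<and> (\<forall>i<n. \<forall>j<n. E j i = l * E i j)"
proof -
  have n: "n > 0" using sc unfolding simple_comod_def by auto
  have EG: "\<And>i j. i < n \<Longrightarrow> j < n \<Longrightarrow> (\<Sum>l<n. E i l * G l j) = (if i = j then 1 else 0)"
    and GE: "\<And>i j. i < n \<Longrightarrow> j < n \<Longrightarrow> (\<Sum>l<n. G i l * E l j) = (if i = j then 1 else 0)"
    using inv unfolding mat_inverse_of_def by auto
  have d: "derived E" using D1[OF c] .
  have uform: "u k i = (\<lambda>t. \<Sum>m<n. \<Sum>j<n. (G m k * E i j) * Anti H (u j m) t)" if k: "k < n" and i: "i < n" for k i
  proof
    fix t
    have "u k i t = (\<Sum>p<n. (\<Sum>m<n. E p m * G m k) * u p i t)"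
      using k by (simp add: EG if_distrib if_distribR sum.delta cong: if_cong)
    also have "\<dots> = (\<Sum>m<n. G m k * (\<Sum>p<n. E p m * u p i t))"
      by (simp add: sum_distrib_left sum_distrib_right mult_ac) (rule sum.swap)
    also have "\<dots> = (\<Sum>m<n. G m k * (\<Sum>j<n. E i j * Anti H (u j m) t))"
      using d i unfolding derived_def by (intro sum.cong refl) auto
    also have "\<dots> = (\<Sum>m<n. \<Sum>j<n. (G m k * E i j) * Anti H (u j m) t)"
      by (simp add: sum_distrib_left mult_ac)
    finally show "u k i t = (\<Sum>m<n. \<Sum>j<n. (G m k * E i j) * Anti H (u j m) t)" .
  qed
  have Sform: "Anti H (u k i) t = (\<Sum>m<n. \<Sum>j<n. (G m k * E i j) * u j m t)" if k: "k < n" and i: "i < n" for k i t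
  proof -
    have "Anti H (u k i) = Anti H (\<lambda>t. \<Sum>m<n. \<Sum>j<n. (G m k * E i j) * Anti H (u j m) t)"
      using uform[OF k i] by simp
    also have "\<dots> = (\<lambda>t. \<Sum>m<n. \<Sum>j<n. (G m k * E i j) * Anti H (Anti H (u j m)) t)"
      by (simp add: Asum Asc)
    also have "\<dots> = (\<lambda>t. \<Sum>m<n. \<Sum>j<n. (G m k * E i j) * u j m t)"
      using S2 by simp
    finally show ?thesis by simp
  qed
  have dT: "derived (\<lambda>i j. E j i)"
    unfolding derived_def
  proof (intro allI impI)
    fix i m t assume i: "i < n" and m: "m < n"
    have "(\<Sum>j<n. E j i * Anti H (u j m) t) = (\<Sum>j<n. E j i * (\<Sum>a<n. \<Sum>b<n. (G a j * E m b) * u b a t))"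
      using m by (intro sum.cong refl) (simp add: Sform)
    also have "\<dots> = (\<Sum>a<n. \<Sum>b<n. E m b * u b a t * (\<Sum>j<n. G a j * E j i))"
      by (simp add: sum_distrib_left sum_distrib_right mult_ac) (rule swap3g)
    also have "\<dots> = (\<Sum>a<n. \<Sum>b<n. E m b * u b a t * (if a = i then 1 else 0))"
      using i GE by simp
    also have "\<dots> = (\<Sum>b<n. E m b * u b i t)"
      using i by (subst sum.swap) (simp add: if_distrib if_distribR sum.delta cong: if_cong)
    finally show "(\<Sum>p<n. E m p * u p i t) = (\<Sum>j<n. E j i * Anti H (u j m) t)" by simp
  qed
  have cT: "colinear_form H n u (\<lambda>i j. E j i)" using D2[OF dT] .
  obtain l where l: "\<And>i j. i < n \<Longrightarrow> j < n \<Longrightarrow> E j i = l * E i j"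
    using schur[OF sc c inv cT] by blast
  obtain i0 j0 where i0: "i0 < n" and j0: "j0 < n" and e0: "E i0 j0 \<noteq> 0"
  proof (rule ccontr)
    assume "\<not> thesis"
    then have "\<forall>i<n. \<forall>j<n. E i j = 0" using that by blast
    then have "(\<Sum>l<n. E 0 l * G l 0) = 0" by simp
    then show False using EG[of 0 0] n by simp
  qed
  have "E i0 j0 = l * (l * E i0 j0)" using l[OF i0 j0] l[OF j0 i0] by simp
  then have "l * l = 1" using e0 by (simp add: mult.assoc[symmetric])
  then have "l = 1 \<or> l = -1" by (metis square_eq_1_iff power2_eq_square)
  then show ?thesis using l by blast
qed

lemma trace_sym: assumes inv: "mat_inverse_of n E G" and s: "\<forall>i<n. \<forall>j<n. E j i = s * E i j"
  shows "(\<Sum>i<n. \<Sum>l<n. E i l * G i l) = s * of_nat n"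
proof -
  have GE: "\<And>i j. i < n \<Longrightarrow> j < n \<Longrightarrow> (\<Sum>l<n. G i l * E l j) = (if i = j then 1 else 0)"
    using inv unfolding mat_inverse_of_def by auto
  have "(\<Sum>i<n. \<Sum>l<n. E i l * G i l) = (\<Sum>i<n. \<Sum>l<n. s * (G i l * E l i))"
  proof (intro sum.cong refl)
    fix i l assume "i \<in> {..<n}" "l \<in> {..<n}"
    then have "E i l = s * E l i" using s by blast
    then show "E i l * G i l = s * (G i l * E l i)" by (simp add: mult_ac)
  qed
  also have "\<dots> = s * (\<Sum>i<n. \<Sum>l<n. G i l * E l i)" by (simp add: sum_distrib_left)
  also have "\<dots> = s * of_nat n" using GE by simp
  finally show ?thesis .
qed

end

theorem theorem6:
  fixes H :: "('i, 'k::{alg_closed_field, field_char_0}) hopf"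
    and h :: "'i \<Rightarrow> 'k"
    and n :: nat
    and u :: "nat \<Rightarrow> nat \<Rightarrow> 'i \<Rightarrow> 'k"
  assumes hopf: "hopf_alg H"
    and cosemi: "cosemisimple H"
    and haar: "haar H h"
    and simple: "simple_comod H n u"
  shows "(\<not> self_dual H n u \<longrightarrow> nu2 H h n u = 0)
    \<and> (self_dual H n u \<longrightarrow>
         (\<forall>E F. colinear_form H n u E \<and> invertible n E \<and>
                mat_inverse_of n (mat_transpose E) F \<longrightarrow>
                nu2 H h n u = of_nat n / mat_trace n (mat_mult n E F)))
    \<and> (self_dual H n u \<and> (\<forall>x. fin x \<longrightarrow> Anti H (Anti H x) = x) \<longrightarrow>
         (nu2 H h n u = 1 \<or> nu2 H h n u = -1)
         \<and> (nu2 H h n u = 1 \<longleftrightarrow>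
              (\<exists>E. colinear_form H n u E \<and> invertible n E \<and>
                   (\<forall>i<n. \<forall>j<n. E j i = E i j)))
         \<and> (nu2 H h n u = -1 \<longleftrightarrow>
              (\<exists>E. colinear_form H n u E \<and> invertible n E \<and>
                   (\<forall>i<n. \<forall>j<n. E j i = - E i j))))"
proof -
  interpret cma H n u h
    using hopf haar simple by unfold_locales (auto simp: simple_comod_def)
  have n: "n > 0" using simple unfolding simple_comod_def by auto
  have nz: "(of_nat n :: 'k) \<noteq> 0" using n by simp
  have P2: "nu2 H h n u = of_nat n / mat_trace n (mat_mult n E F)"
    if c: "colinear_form H n u E" and F: "mat_inverse_of n (mat_transpose E) F" for E F
  proof -
    have G: "mat_inverse_of n E (\<lambda>i j. F j i)"
      using inv_transpose[OF F] unfolding mat_transpose_def by simp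
    have "mat_trace n (mat_mult n E F) = (\<Sum>i<n. \<Sum>l<n. E i l * F l i)"
      unfolding mat_trace_def mat_mult_def by simp
    then show ?thesis using part2[OF simple c G] by simp
  qed
  have P3: "(nu2 H h n u = 1 \<or> nu2 H h n u = -1)
         \<and> (nu2 H h n u = 1 \<longleftrightarrow>
              (\<exists>E. colinear_form H n u E \<and> invertible n E \<and>
                   (\<forall>i<n. \<forall>j<n. E j i = E i j)))
         \<and> (nu2 H h n u = -1 \<longleftrightarrow>
              (\<exists>E. colinear_form H n u E \<and> invertible n E \<and>
                   (\<forall>i<n. \<forall>j<n. E j i = - E i j)))"
    if sd: "self_dual H n u" and S2: "\<forall>x. fin x \<longrightarrow> Anti H (Anti H x) = x"
  proof -
    obtain E where c: "colinear_form H n u E" and inv: "invertible n E"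
      using selfdual_colin[OF sd] by blast
    obtain G where G: "mat_inverse_of n E G" using inv unfolding invertible_def by auto
    obtain l where l1: "l = 1 \<or> l = -1" and l: "\<forall>i<n. \<forall>j<n. E j i = l * E i j"
      using part3_sym[OF simple S2 c G] by blast
    have "nu2 H h n u = of_nat n / (l * of_nat n)"
      using part2[OF simple c G] trace_sym[OF G l] by simp
    then have nl: "nu2 H h n u = l" using l1 nz by auto
    have sym1: "nu2 H h n u = 1" if c': "colinear_form H n u E'" and inv': "invertible n E'"
      and s: "\<forall>i<n. \<forall>j<n. E' j i = E' i j" for E'
    proof -
      obtain G' where G': "mat_inverse_of n E' G'" using inv' unfolding invertible_def by auto
      have "\<forall>i<n. \<forall>j<n. E' j i = 1 * E' i j"
      proof (intro allI impI)
        fix i j assume "i < n" "j < n"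
        then have "E' j i = E' i j" using s by blast
        then show "E' j i = 1 * E' i j" by simp
      qed
      from trace_sym[OF G' this] part2[OF simple c' G'] nz show ?thesis by simp
    qed
    have sym2: "nu2 H h n u = -1" if c': "colinear_form H n u E'" and inv': "invertible n E'"
      and s: "\<forall>i<n. \<forall>j<n. E' j i = - E' i j" for E'
    proof -
      obtain G' where G': "mat_inverse_of n E' G'" using inv' unfolding invertible_def by auto
      have "\<forall>i<n. \<forall>j<n. E' j i = (-1) * E' i j"
      proof (intro allI impI)
        fix i j assume "i < n" "j < n"
        then have "E' j i = - E' i j" using s by blast
        then show "E' j i = (-1) * E' i j" by simp
      qed
      from trace_sym[OF G' this] part2[OF simple c' G'] nz show ?thesis by simp
    qed
    show ?thesis
    proof (intro conjI iffI)
      show "nu2 H h n u = 1 \<or> nu2 H h n u = -1" using nl l1 by simp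
    next
      assume "nu2 H h n u = 1"
      then have l1': "l = 1" using nl by simp
      have "\<forall>i<n. \<forall>j<n. E j i = E i j"
      proof (intro allI impI)
        fix i j assume "i < n" "j < n"
        then have "E j i = l * E i j" using l by blast
        then show "E j i = E i j" using l1' by simp
      qed
      then show "\<exists>E. colinear_form H n u E \<and> invertible n E \<and> (\<forall>i<n. \<forall>j<n. E j i = E i j)"
        using c inv by blast
    next
      assume "\<exists>E. colinear_form H n u E \<and> invertible n E \<and> (\<forall>i<n. \<forall>j<n. E j i = E i j)"
      then show "nu2 H h n u = 1" using sym1 by blast
    next
      assume "nu2 H h n u = -1"
      then have l1': "l = -1" using nl by simp
      have "\<forall>i<n. \<forall>j<n. E j i = - E i j"
      proof (intro allI impI)
        fix i j assume "i < n" "j < n"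
        then have "E j i = l * E i j" using l by blast
        then show "E j i = - E i j" using l1' by simp
      qed
      then show "\<exists>E. colinear_form H n u E \<and> invertible n E \<and> (\<forall>i<n. \<forall>j<n. E j i = - E i j)"
        using c inv by blast
    next
      assume "\<exists>E. colinear_form H n u E \<and> invertible n E \<and> (\<forall>i<n. \<forall>j<n. E j i = - E i j)"
      then show "nu2 H h n u = -1" using sym2 by blast
    qed
  qed
  show ?thesis
  proof (intro conjI impI allI)
    assume "\<not> self_dual H n u" then show "nu2 H h n u = 0" using part1[OF simple] by blast
  next
    fix E F assume "colinear_form H n u E \<and> invertible n E \<and> mat_inverse_of n (mat_transpose E) F"
    then show "nu2 H h n u = of_nat n / mat_trace n (mat_mult n E F)" using P2 by blast
  next
    assume a: "self_dual H n u \<and> (\<forall>x. fin x \<longrightarrow> Anti H (Anti H x) = x)"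
    show "nu2 H h n u = 1 \<or> nu2 H h n u = -1" using P3 a by blast
  next
    assume a: "self_dual H n u \<and> (\<forall>x. fin x \<longrightarrow> Anti H (Anti H x) = x)"
    show "(nu2 H h n u = 1) = (\<exists>E. colinear_form H n u E \<and> invertible n E \<and> (\<forall>i<n. \<forall>j<n. E j i = E i j))"
      using P3[OF conjunct1[OF a] conjunct2[OF a]] by blast
  next
    assume a: "self_dual H n u \<and> (\<forall>x. fin x \<longrightarrow> Anti H (Anti H x) = x)"
    show "(nu2 H h n u = -1) = (\<exists>E. colinear_form H n u E \<and> invertible n E \<and> (\<forall>i<n. \<forall>j<n. E j i = - E i j))"
      using P3[OF conjunct1[OF a] conjunct2[OF a]] by blast
  qed
qed

end
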